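(* Let $\mathcal{O}$, $n$, $\alpha,\beta$ and $\rho=\rho^1\cdots\rho^k$ with index sets $\mathcal{L},\mathcal{N}$ be as in the standing setup. Then $$\sum_{i\in\mathcal{L}}\mathrm{len}(\rho^i)+\sum_{i\in\mathcal{N}}\bigl(\mathrm{len}(\rho^i_{\mathrm{pref}})+\mathrm{len}(\rho^i_{\mathrm{suff}})\bigr)\le 5n^2.$$
   Context: $\mathbb{N}=\{0,1,2,\dots\}$. A one-counter system (OCS) $\mathcal{O}$ consists of a finite set $Q$ of states, a set $T_{>0}\subseteq Q\times\{-1,0,1\}\times Q$ of non-zero transitions and a set $T_{=0}\subseteq Q\times\{0,1\}\times Q$ of zero tests. A configuration is a pair $(q,c)\in Q\times\mathbb{N}$ (state $q$, counter value $c$). A transition $t=(p,d,q)$ has source $p$, target $q$, effect $d$; it can be fired in $(p,c)$ if either $t\in T_{>0}$ and $c>0$, or $t\in T_{=0}$ and $c=0$, yielding $(q,c+d)$. A path is a sequence $(\gamma_1,t_1)\cdots(\gamma_m,t_m)$ such that, with some $\gamma_{m+1}$, firing $t_i$ in $\gamma_i$ yields $\gamma_{i+1}$ for all $i\le m$; its source is $\gamma_1$, target $\gamma_{m+1}$, length $\mathrm{len}=m$, configurations appearing on it are $\gamma_1,\dots,\gamma_{m+1}$, intermediate ones are $\gamma_2,\dots,\gamma_m$; its projection is $\mathrm{proj}=t_1\cdots t_m$ and its effect $\mathrm{eff}$ is the sum of the effects of its transitions. A sequence of transitions is consistent if each transition's target is the next one's source. A cycle is a consistent sequence of non-zero transitions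 starting and ending in the same state (its base state); positive/negative if its effect is positive/negative; simple if no state is visited twice except the base at start and end. The transition multigraph $G$ has vertices $Q$ and an edge $p\to q$ labelled $d$ for each $(p,d,q)\in T_{>0}$; $\mathfrak{S}$ is the set of its SCCs and $n_S$ the number of states in $S\in\mathfrak{S}$. A cycle is contained in $S$ if all its states lie in $S$; $S$ is positively (negatively) enabled if it contains a positive (negative) cycle. For every positively enabled $S$ a simple positive cycle $\sigma^+_S$ contained in $S$ is fixed, and for every negatively enabled $T$ a simple negative cycle $\sigma^-_T$ contained in $T$. An arc is a path whose source and target have counter value $0$ and whose intermediate configurations have positive counter value. A path is low if all configurations appearing on it have counter value $<5n$, where $n=|Q|$. For $S,T\in\mathfrak{S}$, an arc $\rho$ is $(S,T)$-normal if $\rho=\rho_{\mathrm{pref}}\rho_{\mathrm{up}}\rho_{\mathrm{cap}}\rho_{\mathrm{down}}\rho_{\mathrm{suff}}$ (normal decomposition) with $\rho_{\mathrm{pref}},\rho_{\mathrm{suff}}$ low, $\mathrm{proj}(\rho_{\mathrm{up}})=(\sigma^+_S)^a$, $\mathrm{proj}(\rho_{\mathrm{down}})=(\sigma^-_T)^b$ for some $a,b\in\mathbb{N}$, the source of $\rho_{\mathrm{cap}}$ having the base state of $\sigma^+_S$ and its target the base state of $\sigma^-_T$. Writing $A=\mathrm{eff}(\sigma^+_S)$, $B=-\mathrm{eff}(\sigma^-_T)$, such a decomposition is good if: (iii) $aA\le 2\,\mathrm{len}(\rho_{\mathrm{cap}})+2\,\mathrm{lcm}(A,B)$; (iv) $bB\le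 2\,\mathrm{len}(\rho_{\mathrm{cap}})+2\,\mathrm{lcm}(A,B)$; (v) no infix of $\mathrm{proj}(\rho_{\mathrm{cap}})$ is a cycle with effect divisible by $\gcd(A,B)$; (vi) the target of $\rho_{\mathrm{up}}$ and the source of $\rho_{\mathrm{down}}$ have counter values $>n$; (vii) all configurations appearing on $\rho_{\mathrm{pref}}$ and $\rho_{\mathrm{suff}}$ together are pairwise distinct. Standing setup: $\alpha,\beta$ are configurations with counter value $0$; $\rho=\rho^1\rho^2\cdots\rho^k$ is a path from $\alpha$ to $\beta$ that has the minimum possible number of appearing configurations with counter value $0$ among all paths from $\alpha$ to $\beta$; each $\rho^i$ is an arc; $\{1,\dots,k\}=\mathcal{L}\sqcup\mathcal{N}$ where for $i\in\mathcal{L}$, $\rho^i$ is a low arc of minimum length among all low arcs with the same source and target, and for $i\in\mathcal{N}$, $\rho^i$ is $(S_i,T_i)$-normal for some $S_i,T_i\in\mathfrak{S}$ with a fixed good normal decomposition $\rho^i=\rho^i_{\mathrm{pref}}\rho^i_{\mathrm{up}}\rho^i_{\mathrm{cap}}\rho^i_{\mathrm{down}}\rho^i_{\mathrm{suff}}$. For $S,T\in\mathfrak{S}$: $\mathcal{N}_{(S,T)}=\{i\in\mathcal{N}: (S_i,T_i)=(S,T)\}$, $\mathcal{N}_{(S,\cdot)}=\{i\in\mathcal{N}:S_i=S\}$, $\mathcal{N}_{(\cdot,T)}=\{i\in\mathcal{N}:T_i=T\}$. *)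

theory Defs
  imports Main
begin

text \<open>One-counter systems. A transition is a triple (p,d,q) with effect d.
  An OCS is given by a finite state set Q, non-zero transitions Tpos and zero tests Tzero.\<close>

type_synonym 'q trans = "'q \<times> int \<times> 'q"
type_synonym 'q conf = "'q \<times> nat"
text \<open>A path is represented by its source configuration and its list of transitions
  (all appearing configurations are determined by these).\<close>
type_synonym 'q path = "'q conf \<times> 'q trans list"

definition tsrc :: "'q trans \<Rightarrow> 'q" where "tsrc t = fst t"
definition teff :: "'q trans \<Rightarrow> int" where "teff t = fst (snd t)"
definition ttrg :: "'q trans \<Rightarrow> 'q" where "ttrg t = snd (snd t)"

definition wf_ocs :: "'q set \<Rightarrow> 'q trans set \<Rightarrow> 'q trans set \<Rightarrow> bool" where
  "wf_ocs Q Tpos Tzero \<longleftrightarrow> finite Q \<and> Tpos \<subseteq> Q \<times> {-1,0,1} \<times> Q \<and> Tzero \<subseteq> Q \<times> {0,1} \<times> Q"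

definition fireable :: "'q trans set \<Rightarrow> 'q trans set \<Rightarrow> 'q trans \<Rightarrow> 'q conf \<Rightarrow> bool" where
  "fireable Tpos Tzero t \<gamma> \<longleftrightarrow> tsrc t = fst \<gamma> \<and>
     ((t \<in> Tpos \<and> snd \<gamma> > 0) \<or> (t \<in> Tzero \<and> snd \<gamma> = 0))"

definition fire :: "'q trans \<Rightarrow> 'q conf \<Rightarrow> 'q conf" where
  "fire t \<gamma> = (ttrg t, nat (int (snd \<gamma>) + teff t))"

fun confs_from :: "'q conf \<Rightarrow> 'q trans list \<Rightarrow> 'q conf list" where
  "confs_from \<gamma> [] = [\<gamma>]"
| "confs_from \<gamma> (t # ts) = \<gamma> # confs_from (fire t \<gamma>) ts"

definition confs :: "'q path \<Rightarrow> 'q conf list" where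
  "confs \<rho> = confs_from (fst \<rho>) (snd \<rho>)"

definition is_path :: "'q trans set \<Rightarrow> 'q trans set \<Rightarrow> 'q path \<Rightarrow> bool" where
  "is_path Tpos Tzero \<rho> \<longleftrightarrow> (\<forall>i < length (snd \<rho>). fireable Tpos Tzero (snd \<rho> ! i) (confs \<rho> ! i))"

definition psource :: "'q path \<Rightarrow> 'q conf" where "psource \<rho> = fst \<rho>"
definition ptarget :: "'q path \<Rightarrow> 'q conf" where "ptarget \<rho> = last (confs \<rho>)"
definition plen :: "'q path \<Rightarrow> nat" where "plen \<rho> = length (snd \<rho>)"
definition proj :: "'q path \<Rightarrow> 'q trans list" where "proj \<rho> = snd \<rho>"
definition seff :: "'q trans list \<Rightarrow> int" where "seff ts = sum_list (map teff ts)"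

text \<open>intermediate configurations gamma_2, ..., gamma_m\<close>
definition intermediate :: "'q path \<Rightarrow> 'q conf list" where
  "intermediate \<rho> = take (plen \<rho> - 1) (drop 1 (confs \<rho>))"

text \<open>concatenation of paths (used when the target of the first is the source of the second)\<close>
definition pcat :: "'q path \<Rightarrow> 'q path \<Rightarrow> 'q path" where
  "pcat \<rho>1 \<rho>2 = (fst \<rho>1, snd \<rho>1 @ snd \<rho>2)"

definition is_arc :: "'q trans set \<Rightarrow> 'q trans set \<Rightarrow> 'q path \<Rightarrow> bool" where
  "is_arc Tpos Tzero \<rho> \<longleftrightarrow> is_path Tpos Tzero \<rho> \<and> snd (psource \<rho>) = 0 \<and> snd (ptarget \<rho>) = 0
     \<and> (\<forall>\<gamma> \<in> set (intermediate \<rho>). snd \<gamma> > 0)"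

definition low :: "nat \<Rightarrow> 'q path \<Rightarrow> bool" where
  "low n \<rho> \<longleftrightarrow> (\<forall>\<gamma> \<in> set (confs \<rho>). snd \<gamma> < 5 * n)"

definition zero_count :: "'q path \<Rightarrow> nat" where
  "zero_count \<rho> = length (filter (\<lambda>\<gamma>. snd \<gamma> = 0) (confs \<rho>))"

definition consistent :: "'q trans list \<Rightarrow> bool" where
  "consistent ts \<longleftrightarrow> (\<forall>i. Suc i < length ts \<longrightarrow> ttrg (ts ! i) = tsrc (ts ! Suc i))"

definition is_cycle :: "'q trans set \<Rightarrow> 'q trans list \<Rightarrow> bool" where
  "is_cycle Tpos cs \<longleftrightarrow> cs \<noteq> [] \<and> set cs \<subseteq> Tpos \<and> consistent cs \<and> tsrc (hd cs) = ttrg (last cs)"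

definition base :: "'q trans list \<Rightarrow> 'q" where "base cs = tsrc (hd cs)"

definition simple_cycle :: "'q trans set \<Rightarrow> 'q trans list \<Rightarrow> bool" where
  "simple_cycle Tpos cs \<longleftrightarrow> is_cycle Tpos cs \<and> distinct (map tsrc cs)"

definition contained :: "'q trans list \<Rightarrow> 'q set \<Rightarrow> bool" where
  "contained cs S \<longleftrightarrow> (\<forall>t \<in> set cs. tsrc t \<in> S \<and> ttrg t \<in> S)"

definition edge_rel :: "'q trans set \<Rightarrow> ('q \<times> 'q) set" where
  "edge_rel Tpos = {(p, q). \<exists>d. (p, d, q) \<in> Tpos}"

definition is_scc :: "'q set \<Rightarrow> 'q trans set \<Rightarrow> 'q set \<Rightarrow> bool" where
  "is_scc Q Tpos S \<longleftrightarrow> (\<exists>p \<in> Q. S = {q \<in> Q. (p, q) \<in> (edge_rel Tpos)\<^sup>* \<and> (q, p) \<in> (edge_rel Tpos)\<^sup>*})"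

definition pos_enabled :: "'q trans set \<Rightarrow> 'q set \<Rightarrow> bool" where
  "pos_enabled Tpos S \<longleftrightarrow> (\<exists>cs. is_cycle Tpos cs \<and> contained cs S \<and> seff cs > 0)"

definition neg_enabled :: "'q trans set \<Rightarrow> 'q set \<Rightarrow> bool" where
  "neg_enabled Tpos S \<longleftrightarrow> (\<exists>cs. is_cycle Tpos cs \<and> contained cs S \<and> seff cs < 0)"

definition valid_choice :: "'q set \<Rightarrow> 'q trans set \<Rightarrow> ('q set \<Rightarrow> 'q trans list) \<Rightarrow> ('q set \<Rightarrow> 'q trans list) \<Rightarrow> bool" where
  "valid_choice Q Tpos sigp sigm \<longleftrightarrow>
     (\<forall>S. is_scc Q Tpos S \<and> pos_enabled Tpos S \<longrightarrow>
        simple_cycle Tpos (sigp S) \<and> contained (sigp S) S \<and> seff (sigp S) > 0) \<and>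
     (\<forall>T. is_scc Q Tpos T \<and> neg_enabled Tpos T \<longrightarrow>
        simple_cycle Tpos (sigm T) \<and> contained (sigm T) T \<and> seff (sigm T) < 0)"

definition good_normal_decomp ::
  "'q set \<Rightarrow> 'q trans set \<Rightarrow> 'q trans set \<Rightarrow> ('q set \<Rightarrow> 'q trans list) \<Rightarrow> ('q set \<Rightarrow> 'q trans list) \<Rightarrow>
   'q set \<Rightarrow> 'q set \<Rightarrow> 'q path \<Rightarrow>
   'q path \<Rightarrow> 'q path \<Rightarrow> 'q path \<Rightarrow> 'q path \<Rightarrow> 'q path \<Rightarrow> nat \<Rightarrow> nat \<Rightarrow> bool" where
  "good_normal_decomp Q Tpos Tzero sigp sigm S T \<rho> pref up cap down suff a b \<longleftrightarrow>
     (let n = card Q; A = seff (sigp S); B = - seff (sigm T) in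
     is_arc Tpos Tzero \<rho> \<and> is_scc Q Tpos S \<and> is_scc Q Tpos T \<and>
     pos_enabled Tpos S \<and> neg_enabled Tpos T \<and>
     is_path Tpos Tzero pref \<and> is_path Tpos Tzero up \<and> is_path Tpos Tzero cap \<and>
     is_path Tpos Tzero down \<and> is_path Tpos Tzero suff \<and>
     ptarget pref = psource up \<and> ptarget up = psource cap \<and> ptarget cap = psource down \<and>
     ptarget down = psource suff \<and>
     \<rho> = pcat pref (pcat up (pcat cap (pcat down suff))) \<and>
     low n pref \<and> low n suff \<and>
     proj up = concat (replicate a (sigp S)) \<and>
     proj down = concat (replicate b (sigm T)) \<and>
     fst (psource cap) = base (sigp S) \<and> fst (ptarget cap) = base (sigm T) \<and>
     \<comment> \<open>(iii), (iv)\<close>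
     int a * A \<le> 2 * int (plen cap) + 2 * lcm A B \<and>
     int b * B \<le> 2 * int (plen cap) + 2 * lcm A B \<and>
     \<comment> \<open>(v)\<close>
     \<not> (\<exists>u v w. proj cap = u @ v @ w \<and> is_cycle Tpos v \<and> gcd A B dvd seff v) \<and>
     \<comment> \<open>(vi)\<close>
     snd (ptarget up) > n \<and> snd (psource down) > n \<and>
     \<comment> \<open>(vii)\<close>
     distinct (confs pref @ confs suff))"

end

theory Submission
  imports Defs
begin


lemma len_cf[simp]: "length (confs_from g ts) = Suc (length ts)"
  by (induction ts arbitrary: g) auto

lemma cf_ne[simp]: "confs_from g ts \<noteq> []"
  by (cases ts) auto

lemma cf_append: "confs_from g (xs @ ys) = butlast (confs_from g xs) @ confs_from (fold fire xs g) ys"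
  by (induction xs arbitrary: g) auto

lemma cf_nth: "j \<le> length ts \<Longrightarrow> confs_from g ts ! j = fold fire (take j ts) g"
proof (induction ts arbitrary: g j)
  case Nil then show ?case by simp
next
  case (Cons t ts) then show ?case by (cases j) auto
qed

lemma cf_last: "last (confs_from g ts) = fold fire ts g"
  by (induction ts arbitrary: g) auto

fun ipath :: "'q trans set \<Rightarrow> 'q trans set \<Rightarrow> 'q conf \<Rightarrow> 'q trans list \<Rightarrow> bool" where
  "ipath T Z g [] = True"
| "ipath T Z g (t # ts) = (fireable T Z t g \<and> ipath T Z (fire t g) ts)"

lemma all_Suc_conv: "(\<forall>i<Suc l. P i) = (P 0 \<and> (\<forall>i<l. P (Suc i)))"
  by (auto simp: less_Suc_eq_0_disj)

lemma is_path_ipath: "is_path T Z (g, ts) = ipath T Z g ts"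
proof (induction ts arbitrary: g)
  case Nil then show ?case by (simp add: is_path_def)
next
  case (Cons t ts)
  then show ?case by (simp add: is_path_def confs_def all_Suc_conv)
qed

lemma is_path_ipath': "is_path T Z r = ipath T Z (fst r) (snd r)"
  using is_path_ipath[of T Z "fst r" "snd r"] by simp

lemma ipath_append: "ipath T Z g (xs @ ys) = (ipath T Z g xs \<and> ipath T Z (fold fire xs g) ys)"
  by (induction xs arbitrary: g) auto

lemma ipath_cut:
  assumes "ipath T Z g ts" "p \<le> q" "q \<le> length ts" "fold fire (take p ts) g = fold fire (take q ts) g"
  shows "ipath T Z g (take p ts @ drop q ts)"
proof -
  have "ipath T Z g (take p ts @ drop p ts)" using assms(1) by simp
  then have a: "ipath T Z g (take p ts)" by (simp only: ipath_append)
  have "ipath T Z g (take q ts @ drop q ts)" using assms(1) by simp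
  then have b: "ipath T Z (fold fire (take q ts) g) (drop q ts)" by (simp only: ipath_append)
  show ?thesis using a b assms(4) by (simp add: ipath_append)
qed

lemma cf_cut:
  assumes "p \<le> q" "q \<le> length ts" "fold fire (take p ts) g = fold fire (take q ts) g"
  shows "confs_from g (take p ts @ drop q ts) = take p (confs_from g ts) @ drop q (confs_from g ts)"
proof -
  have e1: "confs_from g ts = butlast (confs_from g (take p ts)) @ confs_from (fold fire (take p ts) g) (drop p ts)"
    using cf_append[of g "take p ts" "drop p ts"] by simp
  have l1: "length (butlast (confs_from g (take p ts))) = p" using assms by simp
  have t: "take p (confs_from g ts) = butlast (confs_from g (take p ts))"
    using e1 l1 by (metis append_eq_conv_conj)
  have e2: "confs_from g ts = butlast (confs_from g (take q ts)) @ confs_from (fold fire (take q ts) g) (drop q ts)"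
    using cf_append[of g "take q ts" "drop q ts"] by simp
  have l2: "length (butlast (confs_from g (take q ts))) = q" using assms by simp
  have d: "drop q (confs_from g ts) = confs_from (fold fire (take q ts) g) (drop q ts)"
    using e2 l2 by (metis append_eq_conv_conj)
  show ?thesis using cf_append[of g "take p ts" "drop q ts"] t d assms(3) by simp
qed

lemma ptarget_fold: "ptarget r = fold fire (snd r) (fst r)"
  by (simp add: ptarget_def confs_def cf_last)

lemma confs_nth: "j \<le> plen r \<Longrightarrow> confs r ! j = fold fire (take j (snd r)) (fst r)"
  by (simp add: confs_def plen_def cf_nth)

lemma length_confs[simp]: "length (confs r) = Suc (plen r)"
  by (simp add: confs_def plen_def)

lemma set_intermediate: "\<gamma> \<in> set (intermediate r) \<Longrightarrow> \<exists>m. 0 < m \<and> m < plen r \<and> \<gamma> = confs r ! m"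
proof -
  assume "\<gamma> \<in> set (intermediate r)"
  then obtain j where j: "j < length (intermediate r)" "\<gamma> = intermediate r ! j"
    by (auto simp: in_set_conv_nth)
  then have "j < plen r - 1" by (simp add: intermediate_def)
  moreover have "intermediate r ! j = confs r ! Suc j" using j
    by (simp add: intermediate_def)
  ultimately show ?thesis using j by (intro exI[of _ "Suc j"]) auto
qed

lemma in_intermediate: "0 < m \<Longrightarrow> m < plen r \<Longrightarrow> confs r ! m \<in> set (intermediate r)"
proof -
  assume m: "0 < m" "m < plen r"
  have "intermediate r ! (m - 1) = confs r ! m" using m
    by (simp add: intermediate_def)
  moreover have "m - 1 < length (intermediate r)" using m by (simp add: intermediate_def)
  ultimately show ?thesis by (metis nth_mem)
qed

lemma states_in_Q:
  assumes "wf_ocs Q T Z" "ipath T Z g ts" "fst g \<in> Q"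
  shows "\<forall>c \<in> set (confs_from g ts). fst c \<in> Q"
  using assms(2,3)
proof (induction ts arbitrary: g)
  case Nil then show ?case by simp
next
  case (Cons t ts)
  have "t \<in> T \<or> t \<in> Z" using Cons.prems by (auto simp: fireable_def)
  then have "ttrg t \<in> Q" using assms(1) by (auto simp: wf_ocs_def ttrg_def)
  then have "fst (fire t g) \<in> Q" by (simp add: fire_def)
  then have "\<forall>c \<in> set (confs_from (fire t g) ts). fst c \<in> Q"
    using Cons.IH[of "fire t g"] Cons.prems by simp
  then show ?case using Cons.prems by simp
qed

lemma filter_cut_less:
  assumes "p \<le> z" "z < q" "q \<le> length xs" "P (xs ! z)"
  shows "length (filter P (take p xs @ drop q xs)) < length (filter P xs)"
proof -
  have e: "xs = take p xs @ take (q - p) (drop p xs) @ drop q xs"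
  proof -
    have "drop (q - p) (drop p xs) = drop q xs" using assms by simp
    then have "drop p xs = take (q - p) (drop p xs) @ drop q xs" by (metis append_take_drop_id)
    then show ?thesis by (metis append_take_drop_id)
  qed
  have "take (q - p) (drop p xs) ! (z - p) = xs ! z" using assms by simp
  moreover have "z - p < length (take (q - p) (drop p xs))" using assms by simp
  ultimately have "xs ! z \<in> set (take (q - p) (drop p xs))" by (metis nth_mem)
  then have "filter P (take (q - p) (drop p xs)) \<noteq> []" using assms(4) by (metis filter_empty_conv)
  then have h0: "0 < length (filter P (take (q - p) (drop p xs)))" by simp
  have "length (filter P xs) = length (filter P (take p xs)) + length (filter P (take (q - p) (drop p xs))) + length (filter P (drop q xs))"
    by (subst e) simp
  then show ?thesis using h0 by simp
qed

lemma low_arc_no_repeat: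
  assumes arc: "is_arc T Z r" and lw: "low n r"
    and mn: "\<forall>r'. is_arc T Z r' \<and> low n r' \<and> psource r' = psource r \<and> ptarget r' = ptarget r \<longrightarrow> plen r \<le> plen r'"
    and xy: "x < y" "y < plen r" and eq: "confs r ! x = confs r ! y"
  shows False
proof -
  obtain g tsr where r: "r = (g, tsr)" by (cases r)
  define r' where "r' = (g, take x tsr @ drop y tsr)"
  have len: "plen r = length tsr" using r by (simp add: plen_def)
  have ff: "fold fire (take x tsr) g = fold fire (take y tsr) g"
    using eq xy confs_nth[of x r] confs_nth[of y r] r by simp
  have cr: "confs r' = take x (confs r) @ drop y (confs r)"
    using cf_cut[of x y tsr g] xy ff len r r'_def by (simp add: confs_def)
  have pr: "is_path T Z r'" using arc r r'_def ipath_cut[of T Z g tsr x y] xy ff len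
    by (simp add: is_arc_def is_path_ipath)
  have ps: "psource r' = psource r" using r r'_def by (simp add: psource_def)
  have "drop y (confs r) \<noteq> []" using xy by simp
  then have pt: "ptarget r' = ptarget r" using cr by (simp add: ptarget_def)
  have lw': "low n r'" using lw cr unfolding low_def
    by (metis Un_iff in_set_dropD in_set_takeD set_append)
  have pl: "plen r' = x + (plen r - y)" using r'_def len xy by (simp add: plen_def)
  have inter: "\<forall>\<gamma> \<in> set (intermediate r'). snd \<gamma> > 0"
  proof
    fix \<gamma> assume "\<gamma> \<in> set (intermediate r')"
    then obtain m where m: "0 < m" "m < plen r'" "\<gamma> = confs r' ! m"
      using set_intermediate by blast
    have cr': "confs r' ! m = (take x (confs r) @ drop y (confs r)) ! m" using cr by simp
    have lt: "length (take x (confs r)) = x" using xy by simp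
    show "snd \<gamma> > 0"
    proof (cases "m < x")
      case True
      then have "confs r' ! m = confs r ! m" using cr' lt xy by (simp add: nth_append)
      moreover have "confs r ! m \<in> set (intermediate r)" using in_intermediate[of m r] m(1) True xy by simp
      ultimately show ?thesis using arc m(3) by (simp add: is_arc_def)
    next
      case False
      then have "confs r' ! m = drop y (confs r) ! (m - x)" using cr' lt by (simp add: nth_append)
      also have "... = confs r ! (y + (m - x))" using xy by simp
      finally have e: "confs r' ! m = confs r ! (y + (m - x))" .
      have "y + (m - x) < plen r" using m(2) pl False xy by linarith
      then have "confs r ! (y + (m - x)) \<in> set (intermediate r)"
        using in_intermediate[of "y + (m - x)" r] xy by simp
      then show ?thesis using arc m(3) e by (simp add: is_arc_def)
    qed
  qed
  have "is_arc T Z r'" using pr ps pt inter arc by (simp add: is_arc_def)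
  then have "plen r \<le> plen r'" using mn lw' ps pt by blast
  then show False using pl xy by simp
qed

lemma normal_facts:
  assumes g: "good_normal_decomp Q T Z sp sm S' T' r P U C D Sf a b"
  shows "plen r = plen P + plen U + plen C + plen D + plen Sf"
    and "\<And>j. j \<le> plen P \<Longrightarrow> confs r ! j = confs P ! j"
    and "\<And>j. j \<le> plen Sf \<Longrightarrow> confs r ! (plen r - plen Sf + j) = confs Sf ! j"
    and "low (card Q) P" "low (card Q) Sf" "distinct (confs P @ confs Sf)"
proof -
  have d: "r = pcat P (pcat U (pcat C (pcat D Sf)))"
    "ptarget P = psource U" "ptarget U = psource C" "ptarget C = psource D" "ptarget D = psource Sf"
    and l: "low (card Q) P" "low (card Q) Sf" "distinct (confs P @ confs Sf)"
    using g by (simp_all add: good_normal_decomp_def Let_def)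
  have r1: "fst r = fst P" and r2: "snd r = snd P @ snd U @ snd C @ snd D @ snd Sf"
    using d(1) by (simp_all add: pcat_def)
  show pl: "plen r = plen P + plen U + plen C + plen D + plen Sf"
    using r2 by (simp add: plen_def)
  show "\<And>j. j \<le> plen P \<Longrightarrow> confs r ! j = confs P ! j"
  proof -
    fix j assume j: "j \<le> plen P"
    have "confs r ! j = fold fire (take j (snd r)) (fst r)" using j pl by (simp add: confs_nth)
    also have "... = fold fire (take j (snd P)) (fst P)" using j r1 r2 by (simp add: plen_def)
    also have "... = confs P ! j" using j by (simp add: confs_nth)
    finally show "confs r ! j = confs P ! j" .
  qed
  show "\<And>j. j \<le> plen Sf \<Longrightarrow> confs r ! (plen r - plen Sf + j) = confs Sf ! j"
  proof -
    fix j assume j: "j \<le> plen Sf"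
    have f1: "fold fire (snd P) (fst P) = fst U" using d(2) by (simp add: ptarget_fold psource_def)
    have f2: "fold fire (snd U) (fst U) = fst C" using d(3) by (simp add: ptarget_fold psource_def)
    have f3: "fold fire (snd C) (fst C) = fst D" using d(4) by (simp add: ptarget_fold psource_def)
    have f4: "fold fire (snd D) (fst D) = fst Sf" using d(5) by (simp add: ptarget_fold psource_def)
    have tk: "take (plen r - plen Sf + j) (snd r) = (snd P @ snd U @ snd C @ snd D) @ take j (snd Sf)"
      using r2 pl by (simp add: plen_def)
    have "confs r ! (plen r - plen Sf + j) = fold fire (take (plen r - plen Sf + j) (snd r)) (fst r)"
      using j pl by (simp add: confs_nth)
    also have "... = fold fire (take j (snd Sf)) (fst Sf)"
      unfolding tk r1 using f1 f2 f3 f4 by simp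
    also have "... = confs Sf ! j" using j by (simp add: confs_nth)
    finally show "confs r ! (plen r - plen Sf + j) = confs Sf ! j" .
  qed
  show "low (card Q) P" "low (card Q) Sf" "distinct (confs P @ confs Sf)" using l by auto
qed



theorem lemma3:
  fixes Q :: "'q set" and Tpos Tzero :: "'q trans set"
    and sigp sigm :: "'q set \<Rightarrow> 'q trans list"
    and \<alpha> \<beta> :: "'q conf" and \<rho> :: "'q path" and k :: nat
    and rhos :: "nat \<Rightarrow> 'q path" and L N :: "nat set"
    and Si Ti :: "nat \<Rightarrow> 'q set"
    and pref up cap down suff :: "nat \<Rightarrow> 'q path" and a b :: "nat \<Rightarrow> nat"
  assumes wf: "wf_ocs Q Tpos Tzero"
    and choice: "valid_choice Q Tpos sigp sigm"
    and \<alpha>: "fst \<alpha> \<in> Q" "snd \<alpha> = 0"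
    and \<beta>: "fst \<beta> \<in> Q" "snd \<beta> = 0"
    and \<rho>_path: "is_path Tpos Tzero \<rho>" "psource \<rho> = \<alpha>" "ptarget \<rho> = \<beta>"
    and \<rho>_min: "\<forall>\<rho>'. is_path Tpos Tzero \<rho>' \<and> psource \<rho>' = \<alpha> \<and> ptarget \<rho>' = \<beta>
                  \<longrightarrow> zero_count \<rho> \<le> zero_count \<rho>'"
    and \<rho>_split: "\<rho> = (\<alpha>, concat (map (\<lambda>i. snd (rhos i)) [1..<Suc k]))"
    and arcs: "\<forall>i \<in> {1..k}. is_arc Tpos Tzero (rhos i)"
    and chain_first: "k \<ge> 1 \<longrightarrow> psource (rhos 1) = \<alpha>"
    and chain: "\<forall>i. 1 \<le> i \<and> i < k \<longrightarrow> ptarget (rhos i) = psource (rhos (Suc i))"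
    and chain_last: "k \<ge> 1 \<longrightarrow> ptarget (rhos k) = \<beta>"
    and partition: "L \<union> N = {1..k}" "L \<inter> N = {}"
    and lowarcs: "\<forall>i \<in> L. low (card Q) (rhos i) \<and>
         (\<forall>\<rho>'. is_arc Tpos Tzero \<rho>' \<and> low (card Q) \<rho>' \<and>
                psource \<rho>' = psource (rhos i) \<and> ptarget \<rho>' = ptarget (rhos i)
                \<longrightarrow> plen (rhos i) \<le> plen \<rho>')"
    and normals: "\<forall>i \<in> N. good_normal_decomp Q Tpos Tzero sigp sigm (Si i) (Ti i) (rhos i)
                     (pref i) (up i) (cap i) (down i) (suff i) (a i) (b i)"
  shows "(\<Sum>i\<in>L. plen (rhos i)) + (\<Sum>i\<in>N. plen (pref i) + plen (suff i)) \<le> 5 * (card Q)^2"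
proof -
  define n where "n = card Q"
  define ts where "ts = snd \<rho>"
  define cs where "cs = confs \<rho>"
  define tsl where "tsl i = snd (rhos i)" for i
  define len where "len i = plen (rhos i)" for i
  define G where "G i = concat (map tsl [1..<i])" for i
  define s where "s i = length (G i)" for i
  have fstr: "fst \<rho> = \<alpha>" using \<rho>_split by simp
  have tsl_eq: "tsl = (\<lambda>i. snd (rhos i))" by (rule ext) (simp add: tsl_def)
  have ts_G: "ts = G (Suc k)" unfolding ts_def G_def tsl_eq by (subst \<rho>_split) simp
  have cs_cf: "cs = confs_from \<alpha> ts" by (simp add: cs_def confs_def ts_def fstr)
  have ip: "ipath Tpos Tzero \<alpha> ts" using \<rho>_path(1) fstr by (simp add: is_path_ipath' ts_def)
  have lencs: "length cs = Suc (length ts)" by (simp add: cs_cf)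
  have G_Suc: "\<And>i. 1 \<le> i \<Longrightarrow> G (Suc i) = G i @ tsl i" by (simp add: G_def)
  have s_Suc: "\<And>i. 1 \<le> i \<Longrightarrow> s (Suc i) = s i + len i"
    by (simp add: s_def G_Suc len_def plen_def tsl_def)
  have s_step: "\<And>i. s i \<le> s (Suc i)"
  proof -
    fix i show "s i \<le> s (Suc i)"
    proof (cases "i = 0")
      case True then show ?thesis by (simp add: s_def G_def)
    next
      case False then show ?thesis using s_Suc[of i] by simp
    qed
  qed
  have s_mono: "\<And>i j. i \<le> j \<Longrightarrow> s i \<le> s j"
    using s_step by (metis lift_Suc_mono_le)
  have G_split: "\<And>i. i \<le> k \<Longrightarrow> \<exists>R. ts = G (Suc i) @ R"
  proof -
    fix i assume i: "i \<le> k"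
    have e: "[1..<Suc k] = [1..<Suc i] @ [Suc i..<Suc k]" using upt_add_eq_append[of 1 "Suc i" "k - i"] i by simp
    have "ts = G (Suc i) @ concat (map tsl [Suc i..<Suc k])"
      unfolding ts_G G_def by (subst e) (simp only: map_append concat_append)
    then show "\<exists>R. ts = G (Suc i) @ R" by blast
  qed
  have s_end: "\<And>i. i \<le> k \<Longrightarrow> s (Suc i) \<le> length ts"
    using G_split s_def by fastforce
  have fold_G: "\<And>i. 1 \<le> i \<Longrightarrow> i \<le> k \<Longrightarrow> fold fire (G i) \<alpha> = psource (rhos i)"
  proof -
    fix i show "1 \<le> i \<Longrightarrow> i \<le> k \<Longrightarrow> fold fire (G i) \<alpha> = psource (rhos i)"
    proof (induction i)
      case 0 then show ?case by simp
    next
      case (Suc m)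
      show ?case
      proof (cases "m = 0")
        case True then show ?thesis using chain_first Suc.prems by (simp add: G_def)
      next
        case False
        then have "fold fire (G (Suc m)) \<alpha> = fold fire (tsl m) (psource (rhos m))"
          using Suc G_Suc by simp
        also have "... = ptarget (rhos m)" by (simp add: ptarget_fold tsl_def psource_def)
        also have "... = psource (rhos (Suc m))" using chain False Suc.prems by simp
        finally show ?thesis .
      qed
    qed
  qed
  have pos: "\<And>i j. i \<in> {1..k} \<Longrightarrow> j \<le> len i \<Longrightarrow> cs ! (s i + j) = confs (rhos i) ! j"
  proof -
    fix i j assume i: "i \<in> {1..k}" and j: "j \<le> len i"
    obtain R where R: "ts = G i @ tsl i @ R" using G_split[of i] G_Suc[of i] i by auto
    have "s i + j \<le> length ts" using s_end[of i] s_Suc[of i] i j by simp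
    then have "cs ! (s i + j) = fold fire (take (s i + j) ts) \<alpha>" by (simp add: cs_cf cf_nth)
    also have "take (s i + j) ts = G i @ take j (tsl i)" using R j by (simp add: s_def len_def plen_def tsl_def)
    also have "fold fire (G i @ take j (tsl i)) \<alpha> = fold fire (take j (tsl i)) (psource (rhos i))"
      using fold_G[of i] i by simp
    also have "... = confs (rhos i) ! j" using j by (simp add: confs_nth len_def tsl_def psource_def)
    finally show "cs ! (s i + j) = confs (rhos i) ! j" .
  qed
  have zero_s: "\<And>i. i \<in> {1..k} \<Longrightarrow> snd (cs ! s i) = 0"
  proof -
    fix i assume i: "i \<in> {1..k}"
    have "cs ! s i = confs (rhos i) ! 0" using pos[of i 0] i by simp
    also have "... = psource (rhos i)" by (simp add: confs_nth psource_def)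
    finally show "snd (cs ! s i) = 0" using arcs i by (simp add: is_arc_def)
  qed
  define lp where "lp i = plen (pref i)" for i
  define ls where "ls i = plen (suff i)" for i
  define X where "X i = (if i \<in> L then {0..<len i} else {0..<lp i} \<union> {len i - ls i..<len i})" for i
  have nf: "\<And>i. i \<in> N \<Longrightarrow> lp i + ls i \<le> len i \<and>
      (\<forall>j \<le> lp i. confs (rhos i) ! j = confs (pref i) ! j) \<and>
      (\<forall>j \<le> ls i. confs (rhos i) ! (len i - ls i + j) = confs (suff i) ! j) \<and>
      low (card Q) (pref i) \<and> low (card Q) (suff i) \<and> distinct (confs (pref i) @ confs (suff i))"
  proof -
    fix i assume i: "i \<in> N"
    note g = normals[rule_format, OF i]
    show "?thesis i" using normal_facts[OF g] by (simp add: lp_def ls_def len_def)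
  qed
  have NL: "\<And>i. i \<in> N \<Longrightarrow> i \<notin> L" using partition by auto
  have Xlt: "\<And>i x. i \<in> {1..k} \<Longrightarrow> x \<in> X i \<Longrightarrow> x < len i"
  proof -
    fix i x assume i: "i \<in> {1..k}" and x: "x \<in> X i"
    show "x < len i"
    proof (cases "i \<in> L")
      case True then show ?thesis using x by (simp add: X_def)
    next
      case False
      then have "i \<in> N" using i partition by auto
      then show ?thesis using nf[of i] x False by (auto simp: X_def)
    qed
  qed
  have cardX: "\<And>i. i \<in> {1..k} \<Longrightarrow> card (X i) = (if i \<in> L then len i else lp i + ls i)"
  proof -
    fix i assume i: "i \<in> {1..k}"
    show "?thesis i"
    proof (cases "i \<in> L")
      case True then show ?thesis by (simp add: X_def)
    next
      case False
      then have iN: "i \<in> N" using i partition by auto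
      have "{0..<lp i} \<inter> {len i - ls i..<len i} = {}" using nf[OF iN] by auto
      then have "card ({0..<lp i} \<union> {len i - ls i..<len i}) = lp i + ls i"
        using nf[OF iN] by (simp add: card_Un_disjoint)
      then show ?thesis using False by (simp add: X_def)
    qed
  qed
  have bound: "\<And>i x. i \<in> {1..k} \<Longrightarrow> x \<in> X i \<Longrightarrow> cs ! (s i + x) \<in> Q \<times> {..<5 * n}"
  proof -
    fix i x assume i: "i \<in> {1..k}" and x: "x \<in> X i"
    have xl: "x < len i" using Xlt[OF i x] .
    have "s i + x < length cs" using s_end[of i] s_Suc[of i] i xl lencs by simp
    then have "cs ! (s i + x) \<in> set cs" by simp
    then have st: "fst (cs ! (s i + x)) \<in> Q" using states_in_Q[OF wf ip \<alpha>(1)] cs_cf by blast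
    have e: "cs ! (s i + x) = confs (rhos i) ! x" using pos[OF i] xl by simp
    have "snd (cs ! (s i + x)) < 5 * n"
    proof (cases "i \<in> L")
      case True
      then have "low (card Q) (rhos i)" using lowarcs by blast
      moreover have "confs (rhos i) ! x \<in> set (confs (rhos i))" using xl by (simp add: len_def)
      ultimately show ?thesis using e by (simp add: low_def n_def)
    next
      case False
      then have iN: "i \<in> N" using i partition by auto
      note f = nf[OF iN]
      show ?thesis
      proof (cases "x < lp i")
        case True
        then have "cs ! (s i + x) = confs (pref i) ! x" using e f by simp
        moreover have "confs (pref i) ! x \<in> set (confs (pref i))" using True by (simp add: lp_def)
        ultimately show ?thesis using f by (simp add: low_def n_def)
      next
        case c2: False
        then have xx: "x = len i - ls i + (x - (len i - ls i))" "x - (len i - ls i) \<le> ls i"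
          using x False xl by (auto simp: X_def)
        then have "cs ! (s i + x) = confs (suff i) ! (x - (len i - ls i))" using e f by metis
        moreover have "confs (suff i) ! (x - (len i - ls i)) \<in> set (confs (suff i))"
          using xx by (simp add: ls_def)
        ultimately show ?thesis using f by (simp add: low_def n_def)
      qed
    qed
    then show "cs ! (s i + x) \<in> Q \<times> {..<5 * n}" using st by (cases "cs ! (s i + x)") auto
  qed
  have no_repeat: "\<And>i j x y. i \<in> {1..k} \<Longrightarrow> j \<in> {1..k} \<Longrightarrow> x \<in> X i \<Longrightarrow> y \<in> X j \<Longrightarrow>
      s i + x < s j + y \<Longrightarrow> cs ! (s i + x) = cs ! (s j + y) \<Longrightarrow> False"
  proof -
    fix i j x y assume i: "i \<in> {1..k}" and j: "j \<in> {1..k}" and x: "x \<in> X i" and y: "y \<in> X j"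
      and lt: "s i + x < s j + y" and eq: "cs ! (s i + x) = cs ! (s j + y)"
    define p where "p = s i + x"
    define q where "q = s j + y"
    have xl: "x < len i" using Xlt[OF i x] .
    have yl: "y < len j" using Xlt[OF j y] .
    have qle: "q \<le> length ts" using s_end[of j] s_Suc[of j] j yl q_def by simp
    have pq: "p < q" using lt p_def q_def by simp
    show False
    proof (cases "\<exists>z. p \<le> z \<and> z < q \<and> snd (cs ! z) = 0")
      case True
      then obtain z where z: "p \<le> z" "z < q" "snd (cs ! z) = 0" by blast
      define \<rho>' where "\<rho>' = (\<alpha>, take p ts @ drop q ts)"
      have ff: "fold fire (take p ts) \<alpha> = fold fire (take q ts) \<alpha>"
        using eq qle pq cf_nth[of p ts \<alpha>] cf_nth[of q ts \<alpha>] by (simp add: cs_cf p_def q_def)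
      have c': "confs \<rho>' = take p cs @ drop q cs"
        using cf_cut[OF _ qle ff] pq by (simp add: \<rho>'_def confs_def cs_cf)
      have pth: "is_path Tpos Tzero \<rho>'"
        using ipath_cut[OF ip _ qle ff] pq by (simp add: \<rho>'_def is_path_ipath)
      have src: "psource \<rho>' = \<alpha>" by (simp add: \<rho>'_def psource_def)
      have "drop q cs \<noteq> []" using qle lencs by simp
      then have "ptarget \<rho>' = last cs" using c' by (simp add: ptarget_def)
      then have tgt: "ptarget \<rho>' = \<beta>" using \<rho>_path(3) by (simp add: ptarget_def cs_def)
      have "zero_count \<rho>' < zero_count \<rho>"
        unfolding zero_count_def c' cs_def[symmetric]
        by (rule filter_cut_less[OF z(1) z(2)]) (use qle lencs z(3) in simp_all)
      then show False using \<rho>_min pth src tgt by fastforce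
    next
      case False
      then have nz: "\<And>z. p \<le> z \<Longrightarrow> z < q \<Longrightarrow> snd (cs ! z) \<noteq> 0" by auto
      have pnz: "snd (cs ! p) \<noteq> 0" using nz[of p] pq by simp
      have sj_zero: "snd (cs ! s j) = 0" using zero_s[OF j] .
      have ij: "i = j"
      proof (rule ccontr)
        assume "i \<noteq> j"
        then consider "i < j" | "j < i" by linarith
        then show False
        proof cases
          case 1
          have "s (Suc i) \<le> s j" using s_mono 1 by simp
          then have psj: "p < s j" using s_Suc[of i] i xl p_def by simp
          have sjq: "s j \<le> q" using q_def by simp
          show False
          proof (cases "s j < q")
            case True then show False using nz[of "s j"] sj_zero psj by simp
          next
            case c: False
            then have "s j = q" using sjq by simp
            then show False using sj_zero pnz eq p_def q_def by simp
          qed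
        next
          case 2
          have "s (Suc j) \<le> s i" using s_mono 2 by simp
          then have "q < s i" using s_Suc[of j] j yl q_def by simp
          then show False using pq p_def by simp
        qed
      qed
      have xy: "x < y" using lt ij by simp
      have x0: "x \<noteq> 0"
      proof
        assume "x = 0" then show False using pnz zero_s[OF i] p_def by simp
      qed
      have ceq: "confs (rhos i) ! x = confs (rhos i) ! y"
        using eq pos[OF i] xl yl ij by (metis less_imp_le)
      show False
      proof (cases "i \<in> L")
        case True
        then have "low (card Q) (rhos i)"
          "\<forall>\<rho>'. is_arc Tpos Tzero \<rho>' \<and> low (card Q) \<rho>' \<and> psource \<rho>' = psource (rhos i) \<and> ptarget \<rho>' = ptarget (rhos i) \<longrightarrow> plen (rhos i) \<le> plen \<rho>'"
          using lowarcs by blast+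
        then show False using low_arc_no_repeat[of Tpos Tzero "rhos i" "card Q" x y] arcs i xy yl ij ceq
          by (simp add: len_def)
      next
        case iL: False
        then have iN: "i \<in> N" using i partition by auto
        note f = nf[OF iN]
        have dP: "distinct (confs (pref i))" and dS: "distinct (confs (suff i))"
          and dj: "set (confs (pref i)) \<inter> set (confs (suff i)) = {}" using f by auto
        have xin: "x < lp i \<or> (len i - ls i \<le> x)" using x iL by (auto simp: X_def)
        have yin: "y < lp i \<or> (len i - ls i \<le> y)" using y iL ij by (auto simp: X_def)
        show False
        proof (cases "x < lp i")
          case xp: True
          have cx: "confs (rhos i) ! x = confs (pref i) ! x" using f xp by simp
          show False
          proof (cases "y < lp i")
            case True
            have "confs (rhos i) ! y = confs (pref i) ! y" using f True by simp
            then show False using cx ceq dP xp True xy nth_eq_iff_index_eq[of "confs (pref i)" x y]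
              by (simp add: lp_def)
          next
            case False
            then have yy: "y = len i - ls i + (y - (len i - ls i))" "y - (len i - ls i) \<le> ls i"
              using yin yl ij by auto
            then have "confs (rhos i) ! y = confs (suff i) ! (y - (len i - ls i))" using f by metis
            moreover have "confs (suff i) ! (y - (len i - ls i)) \<in> set (confs (suff i))"
              using yy by (simp add: ls_def)
            moreover have "confs (pref i) ! x \<in> set (confs (pref i))" using xp by (simp add: lp_def)
            ultimately show False using cx ceq dj by auto
          qed
        next
          case False
          then have xx: "x = len i - ls i + (x - (len i - ls i))" "x - (len i - ls i) \<le> ls i"
            using xin xl by auto
          have yy: "y = len i - ls i + (y - (len i - ls i))" "y - (len i - ls i) \<le> ls i"
            using xx xy yl ij by auto
          have "confs (rhos i) ! x = confs (suff i) ! (x - (len i - ls i))" using f xx by metis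
          moreover have "confs (rhos i) ! y = confs (suff i) ! (y - (len i - ls i))" using f yy by metis
          ultimately show False using ceq dS xx yy xy nth_eq_iff_index_eq[of "confs (suff i)" "x - (len i - ls i)" "y - (len i - ls i)"]
            by (simp add: ls_def)
        qed
      qed
    qed
  qed
  define A where "A i = (\<lambda>x. s i + x) ` X i" for i
  define H where "H = (\<Union>i\<in>{1..k}. A i)"
  have finX: "\<And>i. finite (X i)" by (simp add: X_def)
  have cardA: "\<And>i. card (A i) = card (X i)" by (simp add: A_def card_image)
  have Asub: "\<And>i. i \<in> {1..k} \<Longrightarrow> A i \<subseteq> {s i..<s (Suc i)}"
    using Xlt s_Suc by (fastforce simp: A_def)
  have disj: "\<forall>i\<in>{1..k}. \<forall>j\<in>{1..k}. i \<noteq> j \<longrightarrow> A i \<inter> A j = {}"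
  proof (intro ballI impI)
    fix i j assume i: "i \<in> {1..k}" and j: "j \<in> {1..k}" and ne: "i \<noteq> j"
    show "A i \<inter> A j = {}"
    proof (cases "i < j")
      case True
      then have "s (Suc i) \<le> s j" using s_mono by simp
      then show ?thesis using Asub[OF i] Asub[OF j] by fastforce
    next
      case False
      then have "s (Suc j) \<le> s i" using s_mono ne by simp
      then show ?thesis using Asub[OF i] Asub[OF j] by fastforce
    qed
  qed
  have cardH: "card H = (\<Sum>i\<in>{1..k}. card (X i))"
    unfolding H_def using card_UN_disjoint[of "{1..k}" A] disj finX cardA by (simp add: A_def)
  have inj: "inj_on (\<lambda>p. cs ! p) H"
  proof (rule inj_onI)
    fix p q assume p: "p \<in> H" and q: "q \<in> H" and e: "cs ! p = cs ! q"
    obtain i x where ix: "i \<in> {1..k}" "x \<in> X i" "p = s i + x" using p by (auto simp: H_def A_def)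
    obtain j y where jy: "j \<in> {1..k}" "y \<in> X j" "q = s j + y" using q by (auto simp: H_def A_def)
    show "p = q"
    proof (rule ccontr)
      assume "p \<noteq> q"
      then consider "p < q" | "q < p" by linarith
      then show False
      proof cases
        case 1 then show False using no_repeat[OF ix(1) jy(1) ix(2) jy(2)] ix jy e by simp
      next
        case 2 then show False using no_repeat[OF jy(1) ix(1) jy(2) ix(2)] ix jy e by simp
      qed
    qed
  qed
  have img: "(\<lambda>p. cs ! p) ` H \<subseteq> Q \<times> {..<5 * n}"
  proof
    fix c assume "c \<in> (\<lambda>p. cs ! p) ` H"
    then obtain i x where "i \<in> {1..k}" "x \<in> X i" "c = cs ! (s i + x)" by (auto simp: H_def A_def)
    then show "c \<in> Q \<times> {..<5 * n}" using bound by blast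
  qed
  have finQ: "finite Q" using wf by (simp add: wf_ocs_def)
  have "card H = card ((\<lambda>p. cs ! p) ` H)" using inj by (simp add: card_image)
  also have "... \<le> card (Q \<times> {..<5 * n})" using img finQ by (intro card_mono) auto
  also have "... = n * (5 * n)" by (simp add: card_cartesian_product n_def)
  finally have cH: "card H \<le> 5 * n ^ 2" by (simp add: power2_eq_square)
  have fL: "finite L" "finite N" using partition(1) by (metis finite_Un finite_atLeastAtMost)+
  have "(\<Sum>i\<in>{1..k}. card (X i)) = (\<Sum>i\<in>L. card (X i)) + (\<Sum>i\<in>N. card (X i))"
    using partition fL by (metis sum.union_disjoint)
  also have "(\<Sum>i\<in>L. card (X i)) = (\<Sum>i\<in>L. plen (rhos i))"
  proof (rule sum.cong)
    fix i assume "i \<in> L"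
    then have "i \<in> {1..k}" "i \<in> L" using partition(1) by auto
    then show "card (X i) = plen (rhos i)" using cardX by (simp add: len_def)
  qed simp
  also have "(\<Sum>i\<in>N. card (X i)) = (\<Sum>i\<in>N. plen (pref i) + plen (suff i))"
  proof (rule sum.cong)
    fix i assume "i \<in> N"
    then have "i \<in> {1..k}" "i \<notin> L" using partition(1) NL by auto
    then show "card (X i) = plen (pref i) + plen (suff i)" using cardX by (simp add: lp_def ls_def)
  qed simp
  finally show ?thesis using cardH cH n_def by simp
qed

end
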